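(* Let $\kappa$ be a finite field of characteristic $\neq 2$, let $F = \kappa(u)$, and fix $t \in F$ with $t \notin \kappa$. Let $E_t$ be the elliptic curve over $F$ given by $y^2 = x^3 + t x^2 - t^3 x$. For every place $v$ of $F$ (with normalized valuation also denoted $v$), the reduction type of $E_t$ at $v$ is: - if $v(t) > 0$ and $v(t)$ is even: multiplicative; - if $v(t) > 0$ and $v(t)$ is odd: additive (and potentially multiplicative); - if $v(t) < 0$ and $v(t) \equiv 0 \bmod 4$: good; - if $v(t) < 0$ and $v(t) \not\equiv 0 \bmod 4$: additive (and potentially good); - if $v(t) = 0$ and $v(1+4t) = 0$: good; - if $v(t) = 0$ and $v(1+4t) > 0$: multiplicative. *)

theory Defs
  imports "HOL-Computational_Algebra.Polynomial_Factorial"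
begin

text \<open>The rational function field in one variable over a field kappa is the fraction
field of the polynomial ring: the type 'k poly fract.  The constant field kappa is
embedded via constant polynomials.\<close>

definition const_fn :: "'k::field \<Rightarrow> 'k poly fract" where
  "const_fn c = to_fract [:c:]"

text \<open>A place v of F/kappa, identified with its normalized (surjective, Z-valued)
discrete valuation, trivial on the constant field kappa.  The value at 0 (which is
+infinity mathematically) is irrelevant: all statements only use v on nonzero elements.\<close>

definition normalized_place :: "('k::field poly fract \<Rightarrow> int) \<Rightarrow> bool" where
  "normalized_place v \<longleftrightarrow>
     (\<forall>x y. x \<noteq> 0 \<longrightarrow> y \<noteq> 0 \<longrightarrow> v (x * y) = v x + v y) \<and>
     (\<forall>x y. x \<noteq> 0 \<longrightarrow> y \<noteq> 0 \<longrightarrow> x + y \<noteq> 0 \<longrightarrow> v (x + y) \<ge> min (v x) (v y)) \<and>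
     (\<forall>c. c \<noteq> 0 \<longrightarrow> v (const_fn c) = 0) \<and>
     (\<exists>x. x \<noteq> 0 \<and> v x = 1)"

text \<open>Integrality at v (0 counts as integral, v(0) = +infinity).\<close>
definition v_integral :: "('a::zero \<Rightarrow> int) \<Rightarrow> 'a \<Rightarrow> bool" where
  "v_integral v x \<longleftrightarrow> x = 0 \<or> v x \<ge> 0"

text \<open>A Weierstrass equation y^2 + a1 x y + a3 y = x^3 + a2 x^2 + a4 x + a6 is
given by its coefficient tuple (a1, a2, a3, a4, a6).\<close>

type_synonym 'a weq = "'a \<times> 'a \<times> 'a \<times> 'a \<times> 'a"

fun w_b2 :: "'a::comm_ring_1 weq \<Rightarrow> 'a" where
  "w_b2 (a1, a2, a3, a4, a6) = a1^2 + 4*a2"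
fun w_b4 :: "'a::comm_ring_1 weq \<Rightarrow> 'a" where
  "w_b4 (a1, a2, a3, a4, a6) = 2*a4 + a1*a3"
fun w_b6 :: "'a::comm_ring_1 weq \<Rightarrow> 'a" where
  "w_b6 (a1, a2, a3, a4, a6) = a3^2 + 4*a6"
fun w_b8 :: "'a::comm_ring_1 weq \<Rightarrow> 'a" where
  "w_b8 (a1, a2, a3, a4, a6) =
     a1^2*a6 + 4*a2*a6 - a1*a3*a4 + a2*a3^2 - a4^2"

definition w_c4 :: "'a::comm_ring_1 weq \<Rightarrow> 'a" where
  "w_c4 E = (w_b2 E)^2 - 24 * w_b4 E"

definition w_disc :: "'a::comm_ring_1 weq \<Rightarrow> 'a" where
  "w_disc E = - ((w_b2 E)^2 * w_b8 E) - 8 * (w_b4 E)^3 - 27 * (w_b6 E)^2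
              + 9 * w_b2 E * w_b4 E * w_b6 E"

definition w_j :: "'a::field weq \<Rightarrow> 'a" where
  "w_j E = (w_c4 E)^3 / w_disc E"

text \<open>Admissible change of variables x = u^2 x' + r, y = u^3 y' + s u^2 x' + w
(Silverman, Table 3.1).\<close>

fun change_coords :: "'a::field weq \<Rightarrow> 'a \<Rightarrow> 'a \<Rightarrow> 'a \<Rightarrow> 'a \<Rightarrow> 'a weq" where
  "change_coords (a1, a2, a3, a4, a6) u r s w =
     ((a1 + 2*s) / u,
      (a2 - s*a1 + 3*r - s^2) / u^2,
      (a3 + r*a1 + 2*w) / u^3,
      (a4 - s*a3 + 2*r*a2 - (w + r*s)*a1 + 3*r^2 - 2*s*w) / u^4,
      (a6 + r*a4 + r^2*a2 + r^3 - w*a3 - w^2 - r*w*a1) / u^6)"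

definition integral_weq :: "('a::zero \<Rightarrow> int) \<Rightarrow> 'a weq \<Rightarrow> bool" where
  "integral_weq v E \<longleftrightarrow> (case E of (a1, a2, a3, a4, a6) \<Rightarrow>
      v_integral v a1 \<and> v_integral v a2 \<and> v_integral v a3 \<and> v_integral v a4 \<and> v_integral v a6)"

definition integral_model :: "('a::field \<Rightarrow> int) \<Rightarrow> 'a weq \<Rightarrow> 'a weq \<Rightarrow> bool" where
  "integral_model v E E' \<longleftrightarrow>
     (\<exists>u r s w. u \<noteq> 0 \<and> E' = change_coords E u r s w) \<and> integral_weq v E'"

definition minimal_model :: "('a::field \<Rightarrow> int) \<Rightarrow> 'a weq \<Rightarrow> 'a weq \<Rightarrow> bool" where
  "minimal_model v E E' \<longleftrightarrow> integral_model v E E' \<and>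
     (\<forall>E''. integral_model v E E'' \<longrightarrow> v (w_disc E') \<le> v (w_disc E''))"

text \<open>Reduction type of E at v, read off from a minimal model (Silverman VII.5):
good iff v(Disc_min) = 0; multiplicative iff v(Disc_min) > 0 and v(c4_min) = 0;
additive iff v(Disc_min) > 0 and v(c4_min) > 0 (c4_min = 0 counts as v = +infinity).\<close>

definition good_reduction :: "('a::field \<Rightarrow> int) \<Rightarrow> 'a weq \<Rightarrow> bool" where
  "good_reduction v E \<longleftrightarrow>
     (\<exists>E'. minimal_model v E E' \<and> v (w_disc E') = 0)"

definition multiplicative_reduction :: "('a::field \<Rightarrow> int) \<Rightarrow> 'a weq \<Rightarrow> bool" where
  "multiplicative_reduction v E \<longleftrightarrow>
     (\<exists>E'. minimal_model v E E' \<and> v (w_disc E') > 0 \<and> w_c4 E' \<noteq> 0 \<and> v (w_c4 E') = 0)"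

definition additive_reduction :: "('a::field \<Rightarrow> int) \<Rightarrow> 'a weq \<Rightarrow> bool" where
  "additive_reduction v E \<longleftrightarrow>
     (\<exists>E'. minimal_model v E E' \<and> v (w_disc E') > 0 \<and> (w_c4 E' = 0 \<or> v (w_c4 E') > 0))"

text \<open>Potentially good / potentially multiplicative reduction, via the j-invariant
(Silverman Prop. VII.5.5): potentially good iff j is v-integral,
potentially multiplicative iff v(j) < 0.\<close>

definition potentially_good_reduction :: "('a::field \<Rightarrow> int) \<Rightarrow> 'a weq \<Rightarrow> bool" where
  "potentially_good_reduction v E \<longleftrightarrow> v_integral v (w_j E)"

definition potentially_multiplicative_reduction :: "('a::field \<Rightarrow> int) \<Rightarrow> 'a weq \<Rightarrow> bool" where
  "potentially_multiplicative_reduction v E \<longleftrightarrow> w_j E \<noteq> 0 \<and> v (w_j E) < 0"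

definition E_curve :: "'a::comm_ring_1 \<Rightarrow> 'a weq" where
  "E_curve t = (0, t, 0, - (t^3), 0)"

end

theory Submission imports Defs begin

type_synonym 'k ff = "'k poly fract"

lemma to_fract_of_nat: "to_fract (of_nat n) = of_nat n"
  by (induction n) auto

lemma const_fn_0[simp]: "const_fn 0 = 0" by (simp add: const_fn_def)
lemma const_fn_1[simp]: "const_fn 1 = 1" by (simp add: const_fn_def one_pCons[symmetric])
lemma const_fn_mult: "const_fn (a*b) = const_fn a * const_fn b"
  by (simp add: const_fn_def flip: to_fract_mult)
lemma const_fn_uminus: "const_fn (-a) = - const_fn a"
  by (simp add: const_fn_def flip: to_fract_uminus)
lemma const_fn_eq0: "const_fn c = 0 \<longleftrightarrow> c = 0"
  by (simp add: const_fn_def)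
lemma const_fn_numeral: "const_fn (numeral n) = numeral n"
proof -
  have "[:numeral n:] = (of_nat (numeral n) :: 'a poly)"
    by (simp add: of_nat_poly)
  then show ?thesis unfolding const_fn_def
    by (metis of_nat_numeral to_fract_of_nat)
qed


lemma disc_trans:
  fixes a1 a2 a3 a4 a6 :: "'a::field"
  shows "w_disc (change_coords (a1,a2,a3,a4,a6) 1 r s w) = w_disc (a1,a2,a3,a4,a6)"
  unfolding w_disc_def by simp algebra
lemma c4_trans:
  fixes a1 a2 a3 a4 a6 :: "'a::field"
  shows "w_c4 (change_coords (a1,a2,a3,a4,a6) 1 r s w) = w_c4 (a1,a2,a3,a4,a6)"
  unfolding w_c4_def by simp algebra
lemma disc_scale:
  fixes a1 a2 a3 a4 a6 :: "'a::field"
  shows "w_disc (u*a1,u^2*a2,u^3*a3,u^4*a4,u^6*a6) = u^12 * w_disc (a1,a2,a3,a4,a6)"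
  unfolding w_disc_def by simp algebra
lemma c4_scale:
  fixes a1 a2 a3 a4 a6 :: "'a::field"
  shows "w_c4 (u*a1,u^2*a2,u^3*a3,u^4*a4,u^6*a6) = u^4 * w_c4 (a1,a2,a3,a4,a6)"
  unfolding w_c4_def by simp algebra

lemma disc_change:
  fixes E :: "'a::field weq"
  assumes u: "u \<noteq> 0"
  shows "w_disc (change_coords E u r s w) = w_disc E / u^12"
    "w_c4 (change_coords E u r s w) = w_c4 E / u^4"
proof -
  obtain a1 a2 a3 a4 a6 where E: "E = (a1,a2,a3,a4,a6)" by (metis prod_cases5)
  obtain b1 b2 b3 b4 b6 where B: "change_coords E 1 r s w = (b1,b2,b3,b4,b6)" by (metis prod_cases5)
  have C: "change_coords E u r s w = (b1/u, b2/u^2, b3/u^3, b4/u^4, b6/u^6)"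
    using B unfolding E by simp
  have e: "u * (b1/u) = b1" "u^2 * (b2/u^2) = b2" "u^3 * (b3/u^3) = b3" "u^4 * (b4/u^4) = b4"
    "u^6 * (b6/u^6) = b6" using u by simp_all
  have "w_disc E = w_disc (b1,b2,b3,b4,b6)" using disc_trans B unfolding E by metis
  also have "\<dots> = u^12 * w_disc (change_coords E u r s w)"
    unfolding C using disc_scale[of u "b1/u" "b2/u^2" "b3/u^3" "b4/u^4" "b6/u^6"] e by simp
  finally show "w_disc (change_coords E u r s w) = w_disc E / u^12" using u
    by (simp add: field_simps)
  have "w_c4 E = w_c4 (b1,b2,b3,b4,b6)" using c4_trans B unfolding E by metis
  also have "\<dots> = u^4 * w_c4 (change_coords E u r s w)"
    unfolding C using c4_scale[of u "b1/u" "b2/u^2" "b3/u^3" "b4/u^4" "b6/u^6"] e by simp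
  finally show "w_c4 (change_coords E u r s w) = w_c4 E / u^4" using u
    by (simp add: field_simps)
qed

context
  fixes v :: "'k::field ff \<Rightarrow> int"
  assumes P: "normalized_place v"
begin

lemma vmult: "x \<noteq> 0 \<Longrightarrow> y \<noteq> 0 \<Longrightarrow> v (x*y) = v x + v y"
  using P unfolding normalized_place_def by blast
lemma vadd: "x \<noteq> 0 \<Longrightarrow> y \<noteq> 0 \<Longrightarrow> x + y \<noteq> 0 \<Longrightarrow> min (v x) (v y) \<le> v (x+y)"
  using P unfolding normalized_place_def by blast
lemma vconst: "c \<noteq> 0 \<Longrightarrow> v (const_fn c) = 0"
  using P unfolding normalized_place_def by blast
lemma v1: "v 1 = 0" using vconst[of 1] by simp
lemma vm1: "v (-1) = 0" using vconst[of "-1"] by (simp add: const_fn_uminus)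
lemma vnum: "(numeral n :: 'k ff) \<noteq> 0 \<Longrightarrow> v (numeral n) = 0"
  using vconst[of "numeral n"] by (metis const_fn_0 const_fn_numeral)
lemma vuminus: "x \<noteq> 0 \<Longrightarrow> v (-x) = v x"
  using vmult[of "-1" x] vm1 by simp
lemma vinv: "x \<noteq> 0 \<Longrightarrow> v (inverse x) = - v x"
  using vmult[of x "inverse x"] v1 by simp
lemma vdiv: "x \<noteq> 0 \<Longrightarrow> y \<noteq> 0 \<Longrightarrow> v (x / y) = v x - v y"
  using vmult[of x "inverse y"] vinv[of y] by (simp add: divide_inverse)
lemma vpow: "x \<noteq> 0 \<Longrightarrow> v (x ^ n) = int n * v x"
  by (induction n) (auto simp: v1 vmult algebra_simps)
lemma vstrict: "x \<noteq> 0 \<Longrightarrow> y \<noteq> 0 \<Longrightarrow> v x < v y \<Longrightarrow> x + y \<noteq> 0 \<and> v (x+y) = v x"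
proof -
  assume x: "x \<noteq> 0" and y: "y \<noteq> 0" and l: "v x < v y"
  have s: "x + y \<noteq> 0"
  proof
    assume "x + y = 0" then have "x = - y" by (simp add: eq_neg_iff_add_eq_0)
    then show False using l vuminus[OF y] by simp
  qed
  have a: "min (v x) (v y) \<le> v (x+y)" using vadd[OF x y s] .
  have b: "min (v (x+y)) (v (-y)) \<le> v x"
    using vadd[OF s, of "-y"] y x by simp
  show ?thesis using a b l s vuminus[OF y] by linarith
qed

lemma I0: "v_integral v 0" by (simp add: v_integral_def)
lemma I1: "v_integral v 1" by (simp add: v_integral_def v1)
lemma Inum: "v_integral v (numeral n)"
  by (cases "(numeral n::'k ff) = 0") (auto simp: v_integral_def vnum)
lemma Iadd: "v_integral v x \<Longrightarrow> v_integral v y \<Longrightarrow> v_integral v (x+y)"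
  unfolding v_integral_def
  by (metis add.commute add_0 min_def order_trans vadd)
lemma Imult: "v_integral v x \<Longrightarrow> v_integral v y \<Longrightarrow> v_integral v (x*y)"
  unfolding v_integral_def using vmult by force
lemma Iuminus: "v_integral v x \<Longrightarrow> v_integral v (-x)"
  unfolding v_integral_def using vuminus by force
lemma Idiff: "v_integral v x \<Longrightarrow> v_integral v y \<Longrightarrow> v_integral v (x-y)"
  using Iadd[of x "-y"] Iuminus[of y] by simp
lemma Ipow: "v_integral v x \<Longrightarrow> v_integral v (x^n)"
  by (induction n) (auto intro: I1 Imult)

lemmas Irules = I0 I1 Inum Iadd Imult Iuminus Idiff Ipow

lemma I_c4_disc:
  assumes "integral_weq v E"
  shows "v_integral v (w_c4 E)" "v_integral v (w_disc E)"
proof -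
  obtain a1 a2 a3 a4 a6 where E: "E = (a1,a2,a3,a4,a6)" by (metis prod_cases5)
  have h: "v_integral v a1" "v_integral v a2" "v_integral v a3" "v_integral v a4" "v_integral v a6"
    using assms unfolding E integral_weq_def by auto
  show "v_integral v (w_c4 E)" unfolding E w_c4_def by (simp; intro Irules h)
  show "v_integral v (w_disc E)" unfolding E w_disc_def by (simp; intro Irules h)
qed

lemma exists_val: "\<exists>u. u \<noteq> 0 \<and> v u = k"
proof -
  obtain p where p: "p \<noteq> 0" "v p = 1" using P unfolding normalized_place_def by blast
  show ?thesis
  proof (cases "k \<ge> 0")
    case True
    then show ?thesis using p vpow[of p "nat k"] by (intro exI[of _ "p ^ nat k"]) auto
  next
    case False
    then show ?thesis using p vpow[of p "nat (-k)"] vinv[of "p ^ nat (-k)"]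
      by (intro exI[of _ "inverse (p ^ nat (-k))"]) auto
  qed
qed


lemma minimal_crit:
  assumes D: "w_disc E \<noteq> 0" and u': "u' \<noteq> 0" and E': "E' = change_coords E u' r' s' w'"
    and I: "integral_weq v E'"
    and crit: "v (w_disc E') < 12 \<or> (w_c4 E \<noteq> 0 \<and> v (w_c4 E') < 4)"
  shows "minimal_model v E E'"
  unfolding minimal_model_def
proof (intro conjI allI impI)
  show "integral_model v E E'" unfolding integral_model_def using u' E' I by blast
  fix E'' assume "integral_model v E E''"
  then obtain u r s w where u: "u \<noteq> 0" and E'': "E'' = change_coords E u r s w"
    and I'': "integral_weq v E''" unfolding integral_model_def by blast
  have d'': "w_disc E'' = w_disc E / u^12" unfolding E'' by (rule disc_change(1)[OF u])
  have d': "w_disc E' = w_disc E / u'^12" unfolding E' by (rule disc_change(1)[OF u'])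
  have vd'': "v (w_disc E'') = v (w_disc E) - 12 * v u"
    using d'' D u by (simp add: vdiv vpow)
  have vd': "v (w_disc E') = v (w_disc E) - 12 * v u'"
    using d' D u' by (simp add: vdiv vpow)
  have "v (w_disc E'') \<ge> 0" using I_c4_disc(2)[OF I''] d'' D u by (auto simp: v_integral_def)
  show "v (w_disc E') \<le> v (w_disc E'')"
    using crit
  proof
    assume "v (w_disc E') < 12"
    then have "12 * v u < 12 * v u' + 12" using vd' vd'' \<open>v (w_disc E'') \<ge> 0\<close> by linarith
    then have "v u \<le> v u'" by presburger
    then show ?thesis using vd' vd'' by linarith
  next
    assume c: "w_c4 E \<noteq> 0 \<and> v (w_c4 E') < 4"
    have c'': "w_c4 E'' = w_c4 E / u^4" unfolding E'' by (rule disc_change(2)[OF u])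
    have c': "w_c4 E' = w_c4 E / u'^4" unfolding E' by (rule disc_change(2)[OF u'])
    have vc'': "v (w_c4 E'') = v (w_c4 E) - 4 * v u"
      using c'' c u by (simp add: vdiv vpow)
    have vc': "v (w_c4 E') = v (w_c4 E) - 4 * v u'"
      using c' c u' by (simp add: vdiv vpow)
    have "v (w_c4 E'') \<ge> 0" using I_c4_disc(1)[OF I''] c'' c u by (auto simp: v_integral_def)
    then have "4 * v u < 4 * v u' + 4" using vc' vc'' c by linarith
    then have "v u \<le> v u'" by presburger
    then show ?thesis using vd' vd'' by linarith
  qed
qed


lemma disc_E: "w_disc (E_curve t) = 16 * t^8 * (1 + 4*t)"
  unfolding w_disc_def E_curve_def by (simp add: algebra_simps power_def eval_nat_numeral)
lemma c4_E: "w_c4 (E_curve t) = 16 * t^2 * (1 + 3*t)"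
  unfolding w_c4_def E_curve_def by (simp add: algebra_simps eval_nat_numeral)
lemma change_E: "change_coords (E_curve t) u 0 0 0 = (0, t/u^2, 0, -(t^3)/u^4, 0)"
  unfolding E_curve_def by simp

context
  fixes t :: "'k ff"
  assumes char: "(2::'k) \<noteq> 0"
    and nc: "t \<notin> range const_fn"
begin

lemma t0: "t \<noteq> 0" using nc const_fn_0 by (metis rangeI)
lemma four0: "(4::'k ff) \<noteq> 0"
proof -
  have "(4::'k) = 2 * 2" by simp
  then have "(4::'k) \<noteq> 0" using char mult_eq_0_iff by metis
  then show ?thesis using const_fn_numeral[of "num.Bit0 (num.Bit0 num.One)"] const_fn_eq0 by metis
qed
lemma sixteen0: "(16::'k ff) \<noteq> 0"
  using four0 by (metis mult_eq_0_iff numeral_times_numeral semiring_norm(12,13))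
lemma v4: "v 4 = 0" using vnum four0 by blast
lemma v16: "v 16 = 0" using vnum sixteen0 by blast
lemma t4: "1 + 4*t \<noteq> 0"
proof
  assume h: "1 + 4*t = 0"
  have "(4::'k) = 2 * 2" by simp
  then have k4: "(4::'k) \<noteq> 0" using char mult_eq_0_iff by metis
  have "(4 * (-1/4::'k)) = -1" using k4 by simp
  then have "const_fn 4 * const_fn (- 1/4) = (-1 :: 'k ff)"
    by (metis const_fn_mult const_fn_uminus const_fn_1)
  then have "4 * const_fn (-1/4::'k) = - 1" by (simp add: const_fn_numeral)
  also have "- 1 = 4 * t" using h by (metis add.commute add_eq_0_iff)
  finally have "t = const_fn (-1/4::'k)" using four0 by simp
  then show False using nc by auto
qed
lemma D0: "w_disc (E_curve t) \<noteq> 0" using t0 t4 sixteen0 by (simp add: disc_E)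
lemma vD: "v (w_disc (E_curve t)) = 8 * v t + v (1 + 4*t)"
  using t0 t4 sixteen0 by (simp add: disc_E vmult vpow v16)
lemma vC: "1 + 3*t \<noteq> 0 \<Longrightarrow> w_c4 (E_curve t) \<noteq> 0 \<and> v (w_c4 (E_curve t)) = 2 * v t + v (1 + 3*t)"
  using t0 sixteen0 by (simp add: c4_E vmult vpow v16)

lemma model:
  assumes u: "u \<noteq> 0" and a: "v t - 2 * v u \<ge> 0" "3 * v t - 4 * v u \<ge> 0"
  shows "minimal_model v (E_curve t) (change_coords (E_curve t) u 0 0 0) \<or>
         \<not> (v (w_disc (change_coords (E_curve t) u 0 0 0)) < 12 \<or>
            (w_c4 (E_curve t) \<noteq> 0 \<and> v (w_c4 (change_coords (E_curve t) u 0 0 0)) < 4))"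
    "integral_weq v (change_coords (E_curve t) u 0 0 0)"
    "v (w_disc (change_coords (E_curve t) u 0 0 0)) = 8 * v t + v (1 + 4*t) - 12 * v u"
    "w_c4 (E_curve t) \<noteq> 0 \<Longrightarrow> w_c4 (change_coords (E_curve t) u 0 0 0) \<noteq> 0 \<and>
       v (w_c4 (change_coords (E_curve t) u 0 0 0)) = v (w_c4 (E_curve t)) - 4 * v u"
proof -
  show I: "integral_weq v (change_coords (E_curve t) u 0 0 0)"
    unfolding change_E integral_weq_def using a t0 u
    by (simp add: v_integral_def vdiv vpow vuminus)
  then show "minimal_model v (E_curve t) (change_coords (E_curve t) u 0 0 0) \<or>
         \<not> (v (w_disc (change_coords (E_curve t) u 0 0 0)) < 12 \<or>
            (w_c4 (E_curve t) \<noteq> 0 \<and> v (w_c4 (change_coords (E_curve t) u 0 0 0)) < 4))"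
    using minimal_crit[OF D0 u refl I] by blast
  show "v (w_disc (change_coords (E_curve t) u 0 0 0)) = 8 * v t + v (1 + 4*t) - 12 * v u"
    using D0 u by (simp add: disc_change vdiv vpow vD)
  show "w_c4 (E_curve t) \<noteq> 0 \<Longrightarrow> w_c4 (change_coords (E_curve t) u 0 0 0) \<noteq> 0 \<and>
       v (w_c4 (change_coords (E_curve t) u 0 0 0)) = v (w_c4 (E_curve t)) - 4 * v u"
    using u by (simp add: disc_change vdiv vpow)
qed


lemma F1: "v t > 0 \<Longrightarrow> v (1 + 4*t) = 0"
  using vstrict[of 1 "4*t"] t0 four0 by (simp add: v1 vmult v4)
lemma F2: "v t > 0 \<Longrightarrow> 1 + 3*t \<noteq> 0 \<and> v (1 + 3*t) = 0"
proof (cases "(3::'k ff) = 0")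
  case False
  assume "v t > 0"
  then show ?thesis using vstrict[of 1 "3*t"] t0 False by (simp add: v1 vmult vnum)
qed (simp add: v1)
lemma F3: "v t < 0 \<Longrightarrow> v (1 + 4*t) = v t"
  using vstrict[of "4*t" 1] t0 four0 by (simp add: v1 vmult v4 add.commute)
lemma F4: "v t < 0 \<Longrightarrow> 1 + 3*t \<noteq> 0 \<and> v (1 + 3*t) \<ge> v t"
proof (cases "(3::'k ff) = 0")
  case False
  assume "v t < 0"
  then show ?thesis using vstrict[of "3*t" 1] t0 False by (simp add: v1 vmult vnum add.commute)
qed (simp add: v1)
lemma F5: "v (1 + 4*t) > 0 \<Longrightarrow> 1 + 3*t \<noteq> 0 \<and> v (1 + 3*t) = 0"
proof (cases "(3::'k ff) = 0")
  case False
  assume h: "v (1 + 4*t) > 0"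
  have y: "3 * (1 + 4*t) \<noteq> 0" using False t4 mult_eq_0_iff by metis
  have vy: "v (3 * (1 + 4*t)) > 0" using False t4 h vmult[of 3 "1 + 4*t"] vnum[of "num.Bit1 num.One"] by simp
  have "1 + 3 * (1 + 4*t) \<noteq> 0 \<and> v (1 + 3 * (1 + 4*t)) = 0"
    using vstrict[of 1 "3 * (1 + 4*t)"] y vy by (simp add: v1)
  moreover have "1 + 3 * (1 + 4*t) = 4 * (1 + 3*t)" by (simp add: algebra_simps)
  ultimately have z: "4 * (1 + 3*t) \<noteq> 0" "v (4 * (1 + 3*t)) = 0" by metis+
  then have nz: "1 + 3*t \<noteq> 0" by (metis mult_zero_right)
  then show ?thesis using z four0 vmult[of 4 "1 + 3*t"] v4 by simp
qed (simp add: v1)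

lemma vj: "w_c4 (E_curve t) \<noteq> 0 \<Longrightarrow> w_j (E_curve t) \<noteq> 0 \<and>
   v (w_j (E_curve t)) = 3 * v (w_c4 (E_curve t)) - v (w_disc (E_curve t))"
  using D0 by (simp add: w_j_def vdiv vpow)

lemma case1:
  assumes "v t > 0" "even (v t)" shows "multiplicative_reduction v (E_curve t)"
proof -
  obtain m where m: "v t = 2 * m" using assms(2) by (metis evenE)
  obtain u where u: "u \<noteq> 0" "v u = m" using exists_val by blast
  have a: "v t - 2 * v u \<ge> 0" "3 * v t - 4 * v u \<ge> 0" using m u assms by auto
  note M = model[OF u(1) a]
  have c: "w_c4 (E_curve t) \<noteq> 0" "v (w_c4 (E_curve t)) = 4 * m"
    using vC F2 assms m by auto
  show ?thesis unfolding multiplicative_reduction_def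
    using M c F1[OF assms(1)] m u assms(1) by (intro exI[of _ "change_coords (E_curve t) u 0 0 0"]) auto
qed

lemma case2:
  assumes "v t > 0" "odd (v t)"
  shows "additive_reduction v (E_curve t) \<and> potentially_multiplicative_reduction v (E_curve t)"
proof -
  obtain m where m: "v t = 2 * m + 1" using assms(2) by (metis oddE)
  have m0: "m \<ge> 0" using m assms by linarith
  obtain u where u: "u \<noteq> 0" "v u = m" using exists_val by blast
  have a: "v t - 2 * v u \<ge> 0" "3 * v t - 4 * v u \<ge> 0" using m u m0 by auto
  note M = model[OF u(1) a]
  have c: "w_c4 (E_curve t) \<noteq> 0" "v (w_c4 (E_curve t)) = 4 * m + 2"
    using vC F2 assms m by auto
  have "additive_reduction v (E_curve t)" unfolding additive_reduction_def
    using M c F1[OF assms(1)] m u m0 by (intro exI[of _ "change_coords (E_curve t) u 0 0 0"]) auto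
  moreover have "potentially_multiplicative_reduction v (E_curve t)"
    unfolding potentially_multiplicative_reduction_def using vj c vD F1[OF assms(1)] m m0 by auto
  ultimately show ?thesis ..
qed

lemma case3:
  assumes "v t < 0" "4 dvd v t" shows "good_reduction v (E_curve t)"
proof -
  obtain k where k: "v t = 4 * k" using assms(2) by blast
  obtain u where u: "u \<noteq> 0" "v u = 3 * k" using exists_val by blast
  have a: "v t - 2 * v u \<ge> 0" "3 * v t - 4 * v u \<ge> 0" using k u assms by auto
  note M = model[OF u(1) a]
  show ?thesis unfolding good_reduction_def
    using M F3[OF assms(1)] k u by (intro exI[of _ "change_coords (E_curve t) u 0 0 0"]) auto
qed

lemma case4:
  assumes "v t < 0" "\<not> 4 dvd v t"
  shows "additive_reduction v (E_curve t) \<and> potentially_good_reduction v (E_curve t)"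
proof -
  define n where "n = - v t"
  define e where "e = (3 * n + 3) div 4"
  have n0: "n > 0" "\<not> 4 dvd n" using assms n_def by auto
  have ar: "- n + 2 * e \<ge> 0" "- 3 * n + 4 * e \<ge> 0" "0 < 12 * e - 9 * n" "12 * e - 9 * n < 12"
     "4 * e - 3 * n > 0"
    using n0 unfolding e_def by presburger+
  obtain u where u: "u \<noteq> 0" "v u = - e" using exists_val by blast
  have a: "v t - 2 * v u \<ge> 0" "3 * v t - 4 * v u \<ge> 0" using ar u n_def by auto
  note M = model[OF u(1) a]
  have c: "w_c4 (E_curve t) \<noteq> 0" "v (w_c4 (E_curve t)) \<ge> 3 * v t"
    using vC F4[OF assms(1)] by auto
  have "additive_reduction v (E_curve t)" unfolding additive_reduction_def
    using M c F3[OF assms(1)] ar u n_def by (intro exI[of _ "change_coords (E_curve t) u 0 0 0"]) auto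
  moreover have "potentially_good_reduction v (E_curve t)"
    unfolding potentially_good_reduction_def v_integral_def
    using vj c vD F3[OF assms(1)] by auto
  ultimately show ?thesis ..
qed

lemma case5:
  assumes "v t = 0" "v (1 + 4*t) = 0" shows "good_reduction v (E_curve t)"
proof -
  have u: "(1::'k ff) \<noteq> 0" "v 1 = 0" by (simp_all add: v1)
  have a: "v t - 2 * v 1 \<ge> 0" "3 * v t - 4 * v 1 \<ge> 0" using assms u by auto
  note M = model[OF u(1) a]
  show ?thesis unfolding good_reduction_def
    using M assms u by (intro exI[of _ "change_coords (E_curve t) 1 0 0 0"]) auto
qed

lemma case6:
  assumes "v t = 0" "v (1 + 4*t) > 0" shows "multiplicative_reduction v (E_curve t)"
proof -
  have u: "(1::'k ff) \<noteq> 0" "v 1 = 0" by (simp_all add: v1)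
  have a: "v t - 2 * v 1 \<ge> 0" "3 * v t - 4 * v 1 \<ge> 0" using assms u by auto
  note M = model[OF u(1) a]
  have c: "w_c4 (E_curve t) \<noteq> 0" "v (w_c4 (E_curve t)) = 0"
    using vC F5[OF assms(2)] assms by auto
  show ?thesis unfolding multiplicative_reduction_def
    using M c assms u by (intro exI[of _ "change_coords (E_curve t) 1 0 0 0"]) auto
qed

end
end

theorem theorem2p3:
  fixes t :: "'k::{field, finite} poly fract"
    and v :: "'k poly fract \<Rightarrow> int"
  assumes char: "(2::'k) \<noteq> 0"
    and t_nonconst: "t \<notin> range const_fn"
    and place: "normalized_place v"
  shows
    "(v t > 0 \<and> even (v t) \<longrightarrow> multiplicative_reduction v (E_curve t)) \<and>
     (v t > 0 \<and> odd (v t) \<longrightarrow> additive_reduction v (E_curve t)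
                              \<and> potentially_multiplicative_reduction v (E_curve t)) \<and>
     (v t < 0 \<and> 4 dvd v t \<longrightarrow> good_reduction v (E_curve t)) \<and>
     (v t < 0 \<and> \<not> 4 dvd v t \<longrightarrow> additive_reduction v (E_curve t)
                              \<and> potentially_good_reduction v (E_curve t)) \<and>
     (v t = 0 \<and> v (1 + 4*t) = 0 \<longrightarrow> good_reduction v (E_curve t)) \<and>
     (v t = 0 \<and> v (1 + 4*t) > 0 \<longrightarrow> multiplicative_reduction v (E_curve t))"
  using case1[OF place char t_nonconst] case2[OF place char t_nonconst]
    case3[OF place char t_nonconst] case4[OF place char t_nonconst]
    case5[OF place char t_nonconst] case6[OF place char t_nonconst]
  by blast

end
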